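(* Let $F$, $G$, $\Pi$ be as in the context. Let $S$ and $S'$ be two attracting (resp. repelling) strips in $\Sigma_A\times I$ with respect to $G$ such that $\Pi(S)=\Pi(S')$. If $B$ and $B'$ are their maximal attractors (resp. maximal repellers), then $\Pi(B)=\Pi(B')$.
   Context: $I=[0,1]$, $R(x)=1-x$. $F(\xi,p)=(\sigma(\xi),f_{\xi_0}(p))$ on $\Sigma_N\times I$, $\Sigma_N=\{1,\ldots,N\}^{\mathbb Z}$, with $f_i$ $C^1$-diffeomorphisms onto their images. $\mathcal I_P$ / $\mathcal I_R$: indices of orientation preserving / reversing $f_i$. $A=(a_{ij})_{i,j=1}^{2N}$ with $a_{ij}=1$ if ($i\in\mathcal I_P$, $j\le N$), or ($i\in\mathcal I_R$, $j>N$), or ($i-N\in\mathcal I_P$, $j>N$), or ($i-N\in\mathcal I_R$, $j\le N$), else $0$; $\Sigma_A$ the $A$-admissible sequences in $\{1,\ldots,2N\}^{\mathbb Z}$ with shift $\sigma_A$; $\pi(\omega)_n=\overline{\omega_n}$ ($\overline i=i$ for $i\le N$, $\overline i=i-N$ otherwise). $G(\omega,x)=(\sigma_A(\omega),g_{\omega_0}(x))$ with $g_i=f_i$, $g_{i+N}=R\circ f_i\circ R$ ($i\in\mathcal I_P$), $g_i=R\circ f_i$, $g_{i+N}=f_i\circ R$ ($i\in\mathcal I_R$). $C=\{\omega\colon\omega_0\le N\}$; $\Pi(\omega,x)=(\pi(\omega),x)$ if $\omega\in C$, $(\pi(\omega),R(x))$ otherwise. Strips $S_{\varphi,\psi}=\{(\omega,x)\colon\varphi(\omega)\le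 x\le\psi(\omega)\}$ for $\varphi<\psi$ pointwise. A strip $S$ is attracting for $G$ if $G(S)\subset\operatorname{int}S$, repelling if $G^{-1}$ is defined on $S$ and $G^{-1}(S)\subset\operatorname{int}S$. Maximal attractor of attracting $S$: $\bigcap_{n\ge0}G^n(S)$; maximal repeller of repelling $S$: $\bigcap_{n\ge0}G^{-n}(S)$. *)

theory Defs
  imports "HOL-Analysis.Analysis"
begin

text \<open>Sequences in {1..N}^Z, {1..2N}^Z are functions int => nat
(carrying the product topology of the discrete nat).\<close>

definition R :: "real \<Rightarrow> real" where "R x = 1 - x"

definition C1_diffeo_onto_image :: "(real \<Rightarrow> real) \<Rightarrow> bool" where
  "C1_diffeo_onto_image h \<longleftrightarrow> h ` {0..1} \<subseteq> {0..1} \<and>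
     (\<exists>h'. continuous_on {0..1} h' \<and>
        (\<forall>x\<in>{0..1}. (h has_real_derivative h' x) (at x within {0..1}) \<and> h' x \<noteq> 0))"

definition IP :: "nat \<Rightarrow> (nat \<Rightarrow> real \<Rightarrow> real) \<Rightarrow> nat set" where
  "IP N f = {i\<in>{1..N}. \<forall>x\<in>{0..1}. \<forall>y\<in>{0..1}. x < y \<longrightarrow> f i x < f i y}"

definition IR :: "nat \<Rightarrow> (nat \<Rightarrow> real \<Rightarrow> real) \<Rightarrow> nat set" where
  "IR N f = {i\<in>{1..N}. \<forall>x\<in>{0..1}. \<forall>y\<in>{0..1}. x < y \<longrightarrow> f i y < f i x}"

definition Aentry :: "nat \<Rightarrow> (nat \<Rightarrow> real \<Rightarrow> real) \<Rightarrow> nat \<Rightarrow> nat \<Rightarrow> bool" where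
  "Aentry N f i j \<longleftrightarrow>
     (i \<in> IP N f \<and> j \<le> N) \<or> (i \<in> IR N f \<and> j > N) \<or>
     (i > N \<and> i - N \<in> IP N f \<and> j > N) \<or> (i > N \<and> i - N \<in> IR N f \<and> j \<le> N)"

definition SigmaA :: "nat \<Rightarrow> (nat \<Rightarrow> real \<Rightarrow> real) \<Rightarrow> (int \<Rightarrow> nat) set" where
  "SigmaA N f = {\<omega>. \<forall>n. \<omega> n \<in> {1..2*N} \<and> Aentry N f (\<omega> n) (\<omega> (n+1))}"

definition shift :: "(int \<Rightarrow> nat) \<Rightarrow> (int \<Rightarrow> nat)" where
  "shift \<omega> = (\<lambda>n. \<omega> (n + 1))"

definition bar :: "nat \<Rightarrow> nat \<Rightarrow> nat" where
  "bar N i = (if i \<le> N then i else i - N)"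

definition piA :: "nat \<Rightarrow> (int \<Rightarrow> nat) \<Rightarrow> (int \<Rightarrow> nat)" where
  "piA N \<omega> = (\<lambda>n. bar N (\<omega> n))"

definition gmap :: "nat \<Rightarrow> (nat \<Rightarrow> real \<Rightarrow> real) \<Rightarrow> nat \<Rightarrow> real \<Rightarrow> real" where
  "gmap N f i =
     (if i \<le> N then (if i \<in> IP N f then f i else R \<circ> f i)
      else (if i - N \<in> IP N f then R \<circ> f (i - N) \<circ> R else f (i - N) \<circ> R))"

definition Gmap :: "nat \<Rightarrow> (nat \<Rightarrow> real \<Rightarrow> real) \<Rightarrow> (int \<Rightarrow> nat) \<times> real \<Rightarrow> (int \<Rightarrow> nat) \<times> real" where
  "Gmap N f p = (shift (fst p), gmap N f (fst p 0) (snd p))"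

definition PiMap :: "nat \<Rightarrow> (int \<Rightarrow> nat) \<times> real \<Rightarrow> (int \<Rightarrow> nat) \<times> real" where
  "PiMap N p = (piA N (fst p), if fst p 0 \<le> N then snd p else R (snd p))"

definition Xsp :: "nat \<Rightarrow> (nat \<Rightarrow> real \<Rightarrow> real) \<Rightarrow> ((int \<Rightarrow> nat) \<times> real) set" where
  "Xsp N f = SigmaA N f \<times> {0..1}"

definition strip_set :: "nat \<Rightarrow> (nat \<Rightarrow> real \<Rightarrow> real) \<Rightarrow> ((int \<Rightarrow> nat) \<Rightarrow> real) \<Rightarrow> ((int \<Rightarrow> nat) \<Rightarrow> real)
    \<Rightarrow> ((int \<Rightarrow> nat) \<times> real) set" where
  "strip_set N f \<phi> \<psi> = {(\<omega>, x). (\<omega>, x) \<in> Xsp N f \<and> \<phi> \<omega> \<le> x \<and> x \<le> \<psi> \<omega>}"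

definition is_strip :: "nat \<Rightarrow> (nat \<Rightarrow> real \<Rightarrow> real) \<Rightarrow> ((int \<Rightarrow> nat) \<times> real) set \<Rightarrow> bool" where
  "is_strip N f S \<longleftrightarrow> (\<exists>\<phi> \<psi>. (\<forall>\<omega>\<in>SigmaA N f. \<phi> \<omega> < \<psi> \<omega>) \<and> S = strip_set N f \<phi> \<psi>)"

definition rel_int :: "nat \<Rightarrow> (nat \<Rightarrow> real \<Rightarrow> real) \<Rightarrow> ((int \<Rightarrow> nat) \<times> real) set \<Rightarrow> ((int \<Rightarrow> nat) \<times> real) set" where
  "rel_int N f S = (top_of_set (Xsp N f)) interior_of S"

definition attracting_strip :: "nat \<Rightarrow> (nat \<Rightarrow> real \<Rightarrow> real) \<Rightarrow> ((int \<Rightarrow> nat) \<times> real) set \<Rightarrow> bool" where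
  "attracting_strip N f S \<longleftrightarrow> is_strip N f S \<and> Gmap N f ` S \<subseteq> rel_int N f S"

text \<open>G^{-1} defined on S: S lies in the image of Sigma_A x I under (the injective) G;
G^{-1}(S) is the preimage of S in Sigma_A x I.\<close>
definition repelling_strip :: "nat \<Rightarrow> (nat \<Rightarrow> real \<Rightarrow> real) \<Rightarrow> ((int \<Rightarrow> nat) \<times> real) set \<Rightarrow> bool" where
  "repelling_strip N f S \<longleftrightarrow> is_strip N f S \<and> S \<subseteq> Gmap N f ` Xsp N f \<and>
     {p \<in> Xsp N f. Gmap N f p \<in> S} \<subseteq> rel_int N f S"

definition max_attractor :: "nat \<Rightarrow> (nat \<Rightarrow> real \<Rightarrow> real) \<Rightarrow> ((int \<Rightarrow> nat) \<times> real) set \<Rightarrow> ((int \<Rightarrow> nat) \<times> real) set" where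
  "max_attractor N f S = (\<Inter>n. (Gmap N f ^^ n) ` S)"

definition max_repeller :: "nat \<Rightarrow> (nat \<Rightarrow> real \<Rightarrow> real) \<Rightarrow> ((int \<Rightarrow> nat) \<times> real) set \<Rightarrow> ((int \<Rightarrow> nat) \<times> real) set" where
  "max_repeller N f S = (\<Inter>n. {p \<in> Xsp N f. (Gmap N f ^^ n) p \<in> S})"

end

theory Submission
  imports Defs
begin

definition flp :: "nat \<Rightarrow> nat \<Rightarrow> nat" where "flp N i = (if i \<le> N then i + N else i - N)"
definition tau :: "nat \<Rightarrow> (int \<Rightarrow> nat) \<times> real \<Rightarrow> (int \<Rightarrow> nat) \<times> real" where
  "tau N p = ((\<lambda>n. flp N (fst p n)), R (snd p))"

lemma IP_IR_disj: "i \<in> IP N f \<Longrightarrow> i \<notin> IR N f"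
proof
  assume "i \<in> IP N f" "i \<in> IR N f"
  then have "f i 0 < f i 1" "f i 1 < f i 0" unfolding IP_def IR_def by auto
  then show False by simp
qed

lemma IP_le: "i \<in> IP N f \<Longrightarrow> 1 \<le> i \<and> i \<le> N" and IR_le: "i \<in> IR N f \<Longrightarrow> 1 \<le> i \<and> i \<le> N"
  unfolding IP_def IR_def by auto

lemma Aentry_flp:
  assumes "i \<in> {1..2*N}" "j \<in> {1..2*N}" "Aentry N f i j"
  shows "Aentry N f (flp N i) (flp N j)"
  using assms IP_le[of _ N f] IR_le[of _ N f] unfolding Aentry_def flp_def
  by (auto split: if_splits)

lemma Aentry_side:
  assumes "Aentry N f i j"
  shows "(j \<le> N) \<longleftrightarrow> ((i \<le> N) \<longleftrightarrow> bar N i \<in> IP N f)"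
  using assms IP_le[of _ N f] IR_le[of _ N f] IP_IR_disj[of _ N f] unfolding Aentry_def bar_def
  by (auto split: if_splits)

lemma flp_range: "i \<in> {1..2*N} \<Longrightarrow> flp N i \<in> {1..2*N}"
  and flp_flp: "i \<in> {1..2*N} \<Longrightarrow> flp N (flp N i) = i"
  and bar_flp: "i \<in> {1..2*N} \<Longrightarrow> bar N (flp N i) = bar N i"
  and flp_side: "i \<in> {1..2*N} \<Longrightarrow> (flp N i \<le> N) \<longleftrightarrow> \<not> (i \<le> N)"
  unfolding flp_def bar_def by auto

lemma X_D: "p \<in> Xsp N f \<Longrightarrow> fst p n \<in> {1..2*N} \<and> Aentry N f (fst p n) (fst p (n+1)) \<and> snd p \<in> {0..1}"
  unfolding Xsp_def SigmaA_def by auto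

lemma X_I: "(\<And>n. fst p n \<in> {1..2*N} \<and> Aentry N f (fst p n) (fst p (n+1))) \<Longrightarrow> snd p \<in> {0..1} \<Longrightarrow> p \<in> Xsp N f"
  unfolding Xsp_def SigmaA_def by (cases p) auto

lemma tau_X: "p \<in> Xsp N f \<Longrightarrow> tau N p \<in> Xsp N f"
  apply (rule X_I)
  using X_D[of p N f] flp_range Aentry_flp by (auto simp: tau_def R_def)

lemma tau_tau: "p \<in> Xsp N f \<Longrightarrow> tau N (tau N p) = p"
  using X_D[of p N f] flp_flp by (cases p) (auto simp: tau_def R_def fun_eq_iff)

lemma Pi_tau: "p \<in> Xsp N f \<Longrightarrow> PiMap N (tau N p) = PiMap N p"
  using X_D[of p N f] bar_flp flp_side by (cases p) (auto simp: tau_def R_def fun_eq_iff PiMap_def piA_def)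

lemma Pi_eq:
  assumes p: "p \<in> Xsp N f" and q: "q \<in> Xsp N f" and e: "PiMap N p = PiMap N q"
  shows "q = p \<or> q = tau N p"
proof -
  obtain w x where pw: "p = (w, x)" by (cases p)
  obtain v y where qv: "q = (v, y)" by (cases q)
  have bars: "bar N (w n) = bar N (v n)" for n
    using e unfolding pw qv PiMap_def piA_def by (auto simp: fun_eq_iff)
  have xy: "(if w 0 \<le> N then x else R x) = (if v 0 \<le> N then y else R y)"
    using e unfolding pw qv PiMap_def by auto
  have step: "((w (n+1) \<le> N) \<longleftrightarrow> (v (n+1) \<le> N)) \<longleftrightarrow> ((w n \<le> N) \<longleftrightarrow> (v n \<le> N))" for n
    using Aentry_side[of N f "w n" "w (n+1)"] Aentry_side[of N f "v n" "v (n+1)"]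
      X_D[OF p, of n] X_D[OF q, of n] bars[of n] unfolding pw qv by auto
  have wr: "w n \<in> {1..2*N}" and vr: "v n \<in> {1..2*N}" for n
    using X_D[OF p, of n] X_D[OF q, of n] unfolding pw qv by auto
  show ?thesis
  proof (cases "(w 0 \<le> N) \<longleftrightarrow> (v 0 \<le> N)")
    case True
    have "(w n \<le> N) \<longleftrightarrow> (v n \<le> N)" for n
    proof (induct n rule: int_induct[where k=0])
      case base then show ?case using True by simp
    next
      case (step1 i) then show ?case using step[of i] by simp
    next
      case (step2 i) then show ?case using step[of "i-1"] by simp
    qed
    then have "w n = v n" for n using bars[of n] wr[of n] vr[of n] unfolding bar_def
      by (auto split: if_splits)
    then have "v = w" by auto
    moreover have "y = x" using xy True by (auto split: if_splits simp: R_def)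
    ultimately show ?thesis using pw qv by simp
  next
    case False
    have "(w n \<le> N) \<longleftrightarrow> \<not> (v n \<le> N)" for n
    proof (induct n rule: int_induct[where k=0])
      case base then show ?case using False by simp
    next
      case (step1 i) then show ?case using step[of i] by simp
    next
      case (step2 i) then show ?case using step[of "i-1"] by simp
    qed
    then have "v n = flp N (w n)" for n using bars[of n] wr[of n] vr[of n] unfolding bar_def flp_def
      by (auto split: if_splits)
    then have "v = (\<lambda>n. flp N (w n))" by auto
    moreover have "y = R x" using xy False by (auto split: if_splits simp: R_def)
    ultimately show ?thesis using pw qv by (simp add: tau_def)
  qed
qed

lemma gmap_flp:
  assumes "i \<in> {1..2*N}"
  shows "gmap N f (flp N i) (R x) = R (gmap N f i x)"
  using assms by (auto simp: gmap_def flp_def R_def)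

lemma Gmap_tau: "p \<in> Xsp N f \<Longrightarrow> Gmap N f (tau N p) = tau N (Gmap N f p)"
  using X_D[of p N f] gmap_flp by (cases p) (auto simp: Gmap_def tau_def shift_def)

lemma gmap_range:
  assumes "\<forall>i\<in>{1..N}. C1_diffeo_onto_image (f i)" "i \<in> {1..2*N}" "x \<in> {0..1}"
  shows "gmap N f i x \<in> {0..1}"
proof -
  have fi: "\<And>j y. j \<in> {1..N} \<Longrightarrow> y \<in> {0..1} \<Longrightarrow> f j y \<in> {0..1}"
    using assms(1) unfolding C1_diffeo_onto_image_def by blast
  have Rr: "\<And>y. y \<in> {0..1::real} \<Longrightarrow> R y \<in> {0..1}" by (auto simp: R_def)
  show ?thesis
  proof (cases "i \<le> N")
    case True
    then have "i \<in> {1..N}" using assms by auto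
    then show ?thesis using True fi Rr assms(3) by (auto simp: gmap_def)
  next
    case False
    then have "i - N \<in> {1..N}" using assms by auto
    then show ?thesis using False fi Rr assms(3) by (auto simp: gmap_def)
  qed
qed

lemma Gmap_X:
  assumes "\<forall>i\<in>{1..N}. C1_diffeo_onto_image (f i)" "p \<in> Xsp N f"
  shows "Gmap N f p \<in> Xsp N f"
  apply (rule X_I)
  using X_D[OF assms(2)] gmap_range[OF assms(1)] apply (auto simp: Gmap_def shift_def)
  by (metis add.commute add.left_commute one_add_one)

lemma Gn_X:
  assumes "\<forall>i\<in>{1..N}. C1_diffeo_onto_image (f i)" "p \<in> Xsp N f"
  shows "(Gmap N f ^^ n) p \<in> Xsp N f \<and> (Gmap N f ^^ n) (tau N p) = tau N ((Gmap N f ^^ n) p)"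
  by (induct n) (auto simp: assms Gmap_X Gmap_tau)

lemma D_Inter:
  fixes A :: "nat \<Rightarrow> ((int \<Rightarrow> nat) \<times> real) set"
  assumes AX: "\<And>n. A n \<subseteq> Xsp N f" and dec: "\<And>n. A (Suc n) \<subseteq> A n"
  shows "(\<Inter>n. A n) \<union> tau N ` (\<Inter>n. A n) = (\<Inter>n. A n \<union> tau N ` A n)"
proof
  show "(\<Inter>n. A n) \<union> tau N ` (\<Inter>n. A n) \<subseteq> (\<Inter>n. A n \<union> tau N ` A n)" by blast
next
  have decs: "m \<le> n \<Longrightarrow> A n \<subseteq> A m" for m n
    using dec by (metis decseq_Suc_iff decseq_def)
  show "(\<Inter>n. A n \<union> tau N ` A n) \<subseteq> (\<Inter>n. A n) \<union> tau N ` (\<Inter>n. A n)"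
  proof
    fix p assume p: "p \<in> (\<Inter>n. A n \<union> tau N ` A n)"
    show "p \<in> (\<Inter>n. A n) \<union> tau N ` (\<Inter>n. A n)"
    proof (cases "\<forall>n. p \<in> A n")
      case True then show ?thesis by blast
    next
      case False
      then obtain m where m: "p \<notin> A m" by blast
      have t: "tau N p \<in> A n \<and> p \<in> Xsp N f" if "m \<le> n" for n
      proof -
        have "p \<notin> A n" using m decs[OF that] by blast
        then obtain q where q: "q \<in> A n" "p = tau N q" using p by blast
        then have "q \<in> Xsp N f" using AX by blast
        then show ?thesis using q tau_tau[of q N f] tau_X[of q N f] by simp
      qed
      have "tau N p \<in> A n" for n
        using t[of "max m n"] decs[of n "max m n"] by auto
      then have "tau N p \<in> (\<Inter>n. A n)" by blast
      moreover have "p = tau N (tau N p)" using t[OF order_refl] tau_tau[of p N f] by simp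
      ultimately show ?thesis by blast
    qed
  qed
qed

lemma Pi_D:
  assumes "A \<subseteq> Xsp N f" "B \<subseteq> Xsp N f" "PiMap N ` A = PiMap N ` B"
  shows "A \<union> tau N ` A \<subseteq> B \<union> tau N ` B"
proof
  fix p assume "p \<in> A \<union> tau N ` A"
  then obtain a where a: "a \<in> A" "p = a \<or> p = tau N a" by blast
  then obtain b where b: "b \<in> B" "PiMap N b = PiMap N a" using assms(3) by (metis imageE imageI)
  have aX: "a \<in> Xsp N f" and bX: "b \<in> Xsp N f" using a b assms by auto
  from Pi_eq[OF bX aX] b have "a = b \<or> a = tau N b" by auto
  then show "p \<in> B \<union> tau N ` B" using a b tau_tau[OF bX] by auto
qed

lemma Pi_iff:
  assumes "A \<subseteq> Xsp N f" "B \<subseteq> Xsp N f"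
  shows "PiMap N ` A = PiMap N ` B \<longleftrightarrow> A \<union> tau N ` A = B \<union> tau N ` B"
proof
  assume "PiMap N ` A = PiMap N ` B"
  then show "A \<union> tau N ` A = B \<union> tau N ` B" using Pi_D assms by (metis subset_antisym)
next
  have k: "PiMap N ` (C \<union> tau N ` C) = PiMap N ` C" if "C \<subseteq> Xsp N f" for C
  proof -
    have "PiMap N ` tau N ` C = PiMap N ` C"
      unfolding image_image using Pi_tau that by (intro image_cong) auto
    then show ?thesis by (simp add: image_Un)
  qed
  assume "A \<union> tau N ` A = B \<union> tau N ` B"
  then show "PiMap N ` A = PiMap N ` B" using k[OF assms(1)] k[OF assms(2)] by metis
qed

lemma strip_X: "is_strip N f S \<Longrightarrow> S \<subseteq> Xsp N f"
  unfolding is_strip_def strip_set_def by auto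

lemma relint_sub: "rel_int N f S \<subseteq> S"
  unfolding rel_int_def by (rule interior_of_subset)

lemma attr_case:
  assumes C: "\<forall>i\<in>{1..N}. C1_diffeo_onto_image (f i)" and S: "attracting_strip N f S"
  shows "max_attractor N f S \<union> tau N ` max_attractor N f S
         = (\<Inter>n. (Gmap N f ^^ n) ` (S \<union> tau N ` S))"
proof -
  let ?G = "Gmap N f"
  have SX: "S \<subseteq> Xsp N f" using S strip_X unfolding attracting_strip_def by blast
  have GS: "?G ` S \<subseteq> S" using S relint_sub unfolding attracting_strip_def by blast
  define A where "A n = (?G ^^ n) ` S" for n
  have AX: "A n \<subseteq> Xsp N f" for n using Gn_X[OF C] SX unfolding A_def by blast
  have dec: "A (Suc n) \<subseteq> A n" for n
  proof -
    have "A (Suc n) = (?G ^^ n) ` (?G ` S)" unfolding A_def funpow_Suc_right image_comp by simp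
    then show ?thesis using GS unfolding A_def by blast
  qed
  have eq: "A n \<union> tau N ` A n = (?G ^^ n) ` (S \<union> tau N ` S)" for n
  proof -
    have "tau N ` A n = (?G ^^ n) ` (tau N ` S)"
      unfolding A_def image_image using Gn_X[OF C] SX by (intro image_cong) auto
    then show ?thesis by (simp add: image_Un A_def)
  qed
  show ?thesis unfolding max_attractor_def using D_Inter[where A=A, OF AX dec] eq unfolding A_def by simp
qed

lemma rep_case:
  assumes C: "\<forall>i\<in>{1..N}. C1_diffeo_onto_image (f i)" and S: "repelling_strip N f S"
  shows "max_repeller N f S \<union> tau N ` max_repeller N f S
         = (\<Inter>n. {p \<in> Xsp N f. (Gmap N f ^^ n) p \<in> S \<union> tau N ` S})"
proof -
  let ?G = "Gmap N f"
  have SX: "S \<subseteq> Xsp N f" using S strip_X unfolding repelling_strip_def by blast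
  have GS: "\<And>p. p \<in> Xsp N f \<Longrightarrow> ?G p \<in> S \<Longrightarrow> p \<in> S"
    using S relint_sub unfolding repelling_strip_def by blast
  define A where "A n = {p \<in> Xsp N f. (?G ^^ n) p \<in> S}" for n
  have AX: "A n \<subseteq> Xsp N f" for n unfolding A_def by blast
  have dec: "A (Suc n) \<subseteq> A n" for n
  proof
    fix p assume "p \<in> A (Suc n)"
    then have p: "p \<in> Xsp N f" "?G ((?G ^^ n) p) \<in> S" unfolding A_def by auto
    have "(?G ^^ n) p \<in> Xsp N f" using Gn_X[OF C p(1)] by blast
    then show "p \<in> A n" using GS p unfolding A_def by blast
  qed
  have eq: "A n \<union> tau N ` A n = {p \<in> Xsp N f. (?G ^^ n) p \<in> S \<union> tau N ` S}" for n
  proof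
    show "A n \<union> tau N ` A n \<subseteq> {p \<in> Xsp N f. (?G ^^ n) p \<in> S \<union> tau N ` S}"
      unfolding A_def using Gn_X[OF C] tau_X by fastforce
  next
    show "{p \<in> Xsp N f. (?G ^^ n) p \<in> S \<union> tau N ` S} \<subseteq> A n \<union> tau N ` A n"
    proof
      fix p assume p: "p \<in> {p \<in> Xsp N f. (?G ^^ n) p \<in> S \<union> tau N ` S}"
      then have pX: "p \<in> Xsp N f" by blast
      show "p \<in> A n \<union> tau N ` A n"
      proof (cases "(?G ^^ n) p \<in> S")
        case True then show ?thesis using pX unfolding A_def by blast
      next
        case False
        then obtain s where s: "s \<in> S" "(?G ^^ n) p = tau N s" using p by blast
        have "(?G ^^ n) (tau N p) = tau N ((?G ^^ n) p)" using Gn_X[OF C pX] by blast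
        also have "\<dots> = s" using s tau_tau[of s N f] SX by auto
        finally have "tau N p \<in> A n" using s tau_X[OF pX] unfolding A_def by auto
        moreover have "p = tau N (tau N p)" using tau_tau[OF pX] by simp
        ultimately show ?thesis by blast
      qed
    qed
  qed
  show ?thesis unfolding max_repeller_def using D_Inter[where A=A, OF AX dec] eq unfolding A_def by simp
qed

theorem lemma3p27:
  fixes N :: nat and f :: "nat \<Rightarrow> real \<Rightarrow> real"
  assumes "N \<ge> 1"
    and "\<forall>i\<in>{1..N}. C1_diffeo_onto_image (f i)"
  shows "(\<forall>S S'. attracting_strip N f S \<and> attracting_strip N f S' \<and> PiMap N ` S = PiMap N ` S'
            \<longrightarrow> PiMap N ` max_attractor N f S = PiMap N ` max_attractor N f S')
       \<and> (\<forall>S S'. repelling_strip N f S \<and> repelling_strip N f S' \<and> PiMap N ` S = PiMap N ` S'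
            \<longrightarrow> PiMap N ` max_repeller N f S = PiMap N ` max_repeller N f S')"
proof (intro conjI allI impI)
  fix S S' assume h: "attracting_strip N f S \<and> attracting_strip N f S' \<and> PiMap N ` S = PiMap N ` S'"
  have SX: "S \<subseteq> Xsp N f" "S' \<subseteq> Xsp N f" using h strip_X unfolding attracting_strip_def by blast+
  have BX: "max_attractor N f S \<subseteq> Xsp N f" "max_attractor N f S' \<subseteq> Xsp N f"
  proof -
    have "max_attractor N f T \<subseteq> (Gmap N f ^^ 0) ` T" for T
      unfolding max_attractor_def by (rule INT_lower) simp
    then show "max_attractor N f S \<subseteq> Xsp N f" "max_attractor N f S' \<subseteq> Xsp N f"
      using SX by auto
  qed
  have "S \<union> tau N ` S = S' \<union> tau N ` S'" using Pi_iff[OF SX] h by blast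
  then have "max_attractor N f S \<union> tau N ` max_attractor N f S = max_attractor N f S' \<union> tau N ` max_attractor N f S'"
    using attr_case[OF assms(2), of S] attr_case[OF assms(2), of S'] h by (simp only:)
  then show "PiMap N ` max_attractor N f S = PiMap N ` max_attractor N f S'" using Pi_iff[OF BX] by blast
next
  fix S S' assume h: "repelling_strip N f S \<and> repelling_strip N f S' \<and> PiMap N ` S = PiMap N ` S'"
  have SX: "S \<subseteq> Xsp N f" "S' \<subseteq> Xsp N f" using h strip_X unfolding repelling_strip_def by blast+
  have BX: "max_repeller N f S \<subseteq> Xsp N f" "max_repeller N f S' \<subseteq> Xsp N f"
    unfolding max_repeller_def by blast+
  have "S \<union> tau N ` S = S' \<union> tau N ` S'" using Pi_iff[OF SX] h by blast
  then have "max_repeller N f S \<union> tau N ` max_repeller N f S = max_repeller N f S' \<union> tau N ` max_repeller N f S'"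
    using rep_case[OF assms(2), of S] rep_case[OF assms(2), of S'] h by (simp only:)
  then show "PiMap N ` max_repeller N f S = PiMap N ` max_repeller N f S'" using Pi_iff[OF BX] by blast
qed

end
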